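(* For contexts $\Gamma,\Theta,\Delta$ and formulas $A,B$: if $\Theta\vdash A$ has a focused derivation and $\Gamma,A,\Delta\vdash B$ has a focused derivation, then $\Gamma,\Theta,\Delta\vdash B$ has a focused derivation.
   Context: Formulas are built from atoms ($p,q,\dots$) by a binary product: every formula is an atom or $A\bullet B$. A context is a finite (possibly empty) list of formulas; commas denote concatenation. A context is irreducible if its leftmost formula is not a product (it is empty or begins with an atom). A focused derivation of a sequent is a finite derivation tree with no undischarged premises using only the rules: ($\bullet L$): from $A,B,\Delta\vdash C$ infer $A\bullet B,\Delta\vdash C$; ($\bullet R^{foc}$): from $\Gamma\vdash A$ and $\Delta\vdash B$ infer $\Gamma,\Delta\vdash A\bullet B$, where $\Gamma$ is irreducible; and ($id^{atm}$): $p\vdash p$ for atoms $p$. *)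

theory Defs
  imports Main
begin

datatype 'a fm = Atm 'a | Prod "'a fm" "'a fm"

fun irreducible :: "'a fm list \<Rightarrow> bool" where
  "irreducible [] = True"
| "irreducible (Atm p # _) = True"
| "irreducible (Prod _ _ # _) = False"

inductive foc :: "'a fm list \<Rightarrow> 'a fm \<Rightarrow> bool" where
  ProdL: "foc (A # B # \<Delta>) C \<Longrightarrow> foc (Prod A B # \<Delta>) C"
| ProdR: "irreducible \<Gamma> \<Longrightarrow> foc \<Gamma> A \<Longrightarrow> foc \<Delta> B \<Longrightarrow> foc (\<Gamma> @ \<Delta>) (Prod A B)"
| IdAtm: "foc [Atm p] (Atm p)"

end

theory Submission
  imports Defs
begin

lemma atom_inv: "foc T F \<Longrightarrow> F = Atm p \<Longrightarrow> T = [Atm p]"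
  by (induction rule: foc.induct) auto

lemma cut_gen:
  assumes P: "\<And>X Y D C. A = Prod X Y \<Longrightarrow> foc (X#Y#D) C \<Longrightarrow> foc (T@D) C"
    and T: "foc T A"
  shows "foc Xi B \<Longrightarrow> Xi = G@A#D \<Longrightarrow> foc (G@T@D) B"
proof (induction arbitrary: G D rule: foc.induct)
  case (ProdL A1 B1 D1 C)
  show ?case
  proof (cases G)
    case Nil
    with ProdL.prems have "A = Prod A1 B1" "D = D1" by auto
    with P ProdL.hyps Nil show ?thesis by auto
  next
    case (Cons g G')
    with ProdL.prems have g: "g = Prod A1 B1" "D1 = G'@A#D" by auto
    have "foc ((A1#B1#G')@T@D) C" using ProdL.IH[of "A1#B1#G'" D] g by simp
    then show ?thesis using Cons g foc.ProdL by fastforce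
  qed
next
  case (ProdR G0 A1 D0 B1)
  from ProdR.prems have "G0 @ D0 = G @ A # D" by simp
  then consider (L) us where "G0 = G @ us" "us @ D0 = A # D"
    | (R) us where "G = G0 @ us" "D0 = us @ A # D"
    by (auto simp: append_eq_append_conv2)
  then show ?case
  proof cases
    case L
    show ?thesis
    proof (cases us)
      case Nil
      with L have "G0 = G" "D0 = A # D" by auto
      have "foc ([]@T@D) B1" using ProdR.IH(2)[of "[]" D] \<open>D0 = A # D\<close> by simp
      then show ?thesis using foc.ProdR[OF _ ProdR.hyps(2)] ProdR.hyps(1) \<open>G0 = G\<close> by fastforce
    next
      case (Cons u us')
      with L have u: "u = A" "D = us' @ D0" "G0 = G @ A # us'" by auto
      have h: "foc (G@T@us') A1" using ProdR.IH(1)[of G us'] u by simp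
      have irr: "irreducible (G@T@us')"
      proof (cases G)
        case Nil
        with u ProdR.hyps(1) obtain p where "A = Atm p"
          by (cases A) auto
        with atom_inv[OF T] have "T = [Atm p]" by simp
        then show ?thesis using Nil by simp
      next
        case (Cons g G')
        with u ProdR.hyps(1) show ?thesis by (cases g) auto
      qed
      show ?thesis using foc.ProdR[OF irr h ProdR.hyps(3)] u by simp
    qed
  next
    case R
    have "foc (us@T@D) B1" using ProdR.IH(2)[of us D] R by simp
    then show ?thesis using foc.ProdR[OF ProdR.hyps(1) ProdR.hyps(2)] R by fastforce
  qed
next
  case (IdAtm p)
  then have "G = []" "D = []" "A = Atm p" by (auto simp: Cons_eq_append_conv)
  with T show ?case by simp
qed

lemma prod_inv:
  assumes IX: "\<And>T' G D B. foc T' X \<Longrightarrow> foc (G@X#D) B \<Longrightarrow> foc (G@T'@D) B"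
    and IY: "\<And>T' G D B. foc T' Y \<Longrightarrow> foc (G@Y#D) B \<Longrightarrow> foc (G@T'@D) B"
  shows "foc T F \<Longrightarrow> F = Prod X Y \<Longrightarrow> foc (X#Y#D) C \<Longrightarrow> foc (T@D) C"
proof (induction arbitrary: D rule: foc.induct)
  case (ProdL A1 B1 D1 C1)
  then show ?case using foc.ProdL by fastforce
next
  case (ProdR G0 A1 D0 B1)
  then have "foc ([X]@D0@D) C" using IY[of D0 "[X]" D C] by simp
  then have "foc ([]@G0@(D0@D)) C" using IX[of G0 "[]" "D0@D" C] ProdR by simp
  then show ?case by simp
qed simp

lemma cut: "foc T A \<Longrightarrow> foc (G@A#D) B \<Longrightarrow> foc (G@T@D) B"
proof (induction A arbitrary: T G D B)
  case (Atm x)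
  then show ?case using cut_gen[of "Atm x" T] by auto
next
  case (Prod X Y)
  have P: "\<And>X' Y' D C. Prod X Y = Prod X' Y' \<Longrightarrow> foc (X'#Y'#D) C \<Longrightarrow> foc (T@D) C"
    using prod_inv[OF Prod.IH(1) Prod.IH(2) Prod.prems(1)] by blast
  show ?case using cut_gen[OF P Prod.prems(1) Prod.prems(2)] by simp
qed

theorem lemma1p14:
  fixes \<Gamma> \<Theta> \<Delta> :: "'a fm list" and A B :: "'a fm"
  assumes "foc \<Theta> A"
    and "foc (\<Gamma> @ [A] @ \<Delta>) B"
  shows "foc (\<Gamma> @ \<Theta> @ \<Delta>) B"
  using cut assms by simp

end
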